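(* Let $T$ be a decomposition tree of a distance-hereditary graph $G$ and let $v$ be an internal node of $T$. Then $|\hat\gamma_k(v)-\hat\gamma_{k+1}(v)|=1$ for every integer $0\le k<|\hat{TS}(v)|$.
   Context: All graphs are finite, simple, undirected. For a graph $H$ and $S\subseteq V(H)$, $N_H[S]$ is $S$ together with all vertices adjacent to a vertex of $S$, and $H[S]$ is the induced subgraph. Graphs carry a "twin set": a single-vertex graph on $x$ has twin set $\{x\}$. For vertex-disjoint graphs $G_l,G_r$ with twin sets $TS(G_l),TS(G_r)$: the true twin operation $G_l\otimes G_r$ has vertex set $V(G_l)\cup V(G_r)$, edge set $E(G_l)\cup E(G_r)\cup\{uw: u\in TS(G_l), w\in TS(G_r)\}$ and twin set $TS(G_l)\cup TS(G_r)$; the false twin operation $G_l\odot G_r$ has vertex set $V(G_l)\cup V(G_r)$, edge set $E(G_l)\cup E(G_r)$, twin set $TS(G_l)\cup TS(G_r)$; the attachment operation $G_l\oplus G_r$ has the same vertex and edge sets as $G_l\otimes G_r$ and twin set $TS(G_l)$. A decomposition tree $T$ of $G$ is a rooted binary tree whose leaves are in bijection with $V(G)$, each internal node having a left and a right child and a label in $\{\otimes,\odot,\oplus\}$; for each node $v$ define $\hat G(v)$ and $\hat{TS}(v)$ recursively: for a leaf $x$, the single-vertex graph on $x$ with twin set $\{x\}$; for an internal node $v$ with label $\circ$ and children $v_l,v_r$, $\hat G(v)=\hat G(v_l)\circ\hat G(v_r)$ with the corresponding twin set; one requires $\hat G(\text{root})=G$. Then $\hat G(v)$ is the subgraph of $G$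 induced by the set $\hat V(v)$ of leaves below $v$. For a node $v$ and $0\le k\le|\hat{TS}(v)|$, call $S\subseteq\hat V(v)$ $k$-feasible if $\hat V(v)\setminus\hat{TS}(v)\subseteq N_{\hat G(v)}[S]$ and there is $X\subseteq S\cap\hat{TS}(v)$ with $|X|=k$ such that $\hat G(v)[S\setminus X]$ has a perfect matching. $\hat\gamma_k(v)$ is the minimum size of a $k$-feasible set. *)

theory Defs
  imports Main
begin

definition simple_graph :: "'a set \<Rightarrow> 'a set set \<Rightarrow> bool" where
  "simple_graph V E \<longleftrightarrow> finite V \<and> (\<forall>e\<in>E. \<exists>u w. e = {u, w} \<and> u \<noteq> w \<and> u \<in> V \<and> w \<in> V)"

definition walk_in :: "'a set set \<Rightarrow> 'a set \<Rightarrow> 'a list \<Rightarrow> bool" where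
  "walk_in E A xs \<longleftrightarrow> xs \<noteq> [] \<and> set xs \<subseteq> A \<and> (\<forall>(a, b) \<in> set (zip xs (tl xs)). {a, b} \<in> E)"

definition connected_in :: "'a set set \<Rightarrow> 'a set \<Rightarrow> bool" where
  "connected_in E A \<longleftrightarrow>
     (\<forall>u\<in>A. \<forall>w\<in>A. \<exists>xs. walk_in E A xs \<and> hd xs = u \<and> last xs = w)"

definition dist_in :: "'a set set \<Rightarrow> 'a set \<Rightarrow> 'a \<Rightarrow> 'a \<Rightarrow> nat" where
  "dist_in E A u w = (LEAST n. \<exists>xs. walk_in E A xs \<and> hd xs = u \<and> last xs = w \<and> length xs = Suc n)"

definition distance_hereditary :: "'a set \<Rightarrow> 'a set set \<Rightarrow> bool" where
  "distance_hereditary V E \<longleftrightarrow> simple_graph V E \<and>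
     (\<forall>A \<subseteq> V. connected_in E A \<longrightarrow> (\<forall>u\<in>A. \<forall>w\<in>A. dist_in E A u w = dist_in E V u w))"

datatype op_label = TrueTwin | FalseTwin | Attach

datatype 'a dtree = Leaf 'a | Node op_label "'a dtree" "'a dtree"

fun tverts :: "'a dtree \<Rightarrow> 'a set" where
  "tverts (Leaf x) = {x}"
| "tverts (Node _ l r) = tverts l \<union> tverts r"

fun tts :: "'a dtree \<Rightarrow> 'a set" where
  "tts (Leaf x) = {x}"
| "tts (Node TrueTwin l r) = tts l \<union> tts r"
| "tts (Node FalseTwin l r) = tts l \<union> tts r"
| "tts (Node Attach l r) = tts l"

fun tedges :: "'a dtree \<Rightarrow> 'a set set" where
  "tedges (Leaf x) = {}"
| "tedges (Node TrueTwin l r) = tedges l \<union> tedges r \<union> {{u, w} | u w. u \<in> tts l \<and> w \<in> tts r}"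
| "tedges (Node FalseTwin l r) = tedges l \<union> tedges r"
| "tedges (Node Attach l r) = tedges l \<union> tedges r \<union> {{u, w} | u w. u \<in> tts l \<and> w \<in> tts r}"

fun leaves :: "'a dtree \<Rightarrow> 'a list" where
  "leaves (Leaf x) = [x]"
| "leaves (Node _ l r) = leaves l @ leaves r"

text \<open>Nodes of the tree, each represented by the subtree rooted at it (well defined since
  leaves are pairwise distinct).\<close>
fun subtrees :: "'a dtree \<Rightarrow> 'a dtree set" where
  "subtrees (Leaf x) = {Leaf x}"
| "subtrees (Node c l r) = insert (Node c l r) (subtrees l \<union> subtrees r)"

fun is_internal :: "'a dtree \<Rightarrow> bool" where
  "is_internal (Leaf _) = False"
| "is_internal (Node _ _ _) = True"

definition decomposition_tree :: "'a dtree \<Rightarrow> 'a set \<Rightarrow> 'a set set \<Rightarrow> bool" where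
  "decomposition_tree T V E \<longleftrightarrow> distinct (leaves T) \<and> tverts T = V \<and> tedges T = E"

definition closed_nbhd :: "'a set set \<Rightarrow> 'a set \<Rightarrow> 'a set" where
  "closed_nbhd E S = S \<union> {w. \<exists>u\<in>S. {u, w} \<in> E}"

definition has_perfect_matching :: "'a set set \<Rightarrow> 'a set \<Rightarrow> bool" where
  "has_perfect_matching E A \<longleftrightarrow>
     (\<exists>M \<subseteq> E. (\<forall>e\<in>M. e \<subseteq> A) \<and> (\<forall>e\<in>M. \<forall>f\<in>M. e \<noteq> f \<longrightarrow> e \<inter> f = {}) \<and> \<Union>M = A)"

definition k_feasible :: "'a dtree \<Rightarrow> nat \<Rightarrow> 'a set \<Rightarrow> bool" where
  "k_feasible v k S \<longleftrightarrow> S \<subseteq> tverts v \<and>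
     tverts v - tts v \<subseteq> closed_nbhd (tedges v) S \<and>
     (\<exists>X. X \<subseteq> S \<inter> tts v \<and> card X = k \<and> has_perfect_matching (tedges v) (S - X))"

definition gamma_hat :: "'a dtree \<Rightarrow> nat \<Rightarrow> nat" where
  "gamma_hat v k = (LEAST n. \<exists>S. k_feasible v k S \<and> card S = n)"

end

theory Submission
  imports Defs
begin

lemma tts_sub: "tts v \<subseteq> tverts v"
proof (induction v)
  case (Node c l r) then show ?case by (cases c) auto
qed simp

lemma tts_ne: "tts v \<noteq> {}"
proof (induction v)
  case (Node c l r) then show ?case by (cases c) auto
qed simp

lemma fin_tverts: "finite (tverts v)"
  by (induction v) auto

lemma tedges_sub: "e \<in> tedges v \<Longrightarrow> e \<subseteq> tverts v"
proof (induction v arbitrary: e)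
  case (Node c l r) then show ?case using tts_sub[of l] tts_sub[of r] by (cases c) auto
qed simp

lemma nbr: "x \<in> tverts v - tts v \<Longrightarrow> \<exists>w. {x, w} \<in> tedges v"
proof (induction v arbitrary: x)
  case (Leaf y) then show ?case by simp
next
  case (Node c l r)
  show ?case
  proof (cases c)
    case TrueTwin
    have "x \<in> tverts l - tts l \<or> x \<in> tverts r - tts r" using Node.prems TrueTwin by auto
    then obtain w where "{x,w} \<in> tedges l \<or> {x,w} \<in> tedges r" using Node.IH by blast
    then show ?thesis using TrueTwin by auto
  next
    case FalseTwin
    have "x \<in> tverts l - tts l \<or> x \<in> tverts r - tts r" using Node.prems FalseTwin by auto
    then obtain w where "{x,w} \<in> tedges l \<or> {x,w} \<in> tedges r" using Node.IH by blast
    then show ?thesis using FalseTwin by auto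
  next
    case Attach
    obtain a where a: "a \<in> tts l" using tts_ne[of l] by blast
    show ?thesis
    proof (cases "x \<in> tverts l")
      case True
      then obtain w where "{x,w} \<in> tedges l" using Node.IH(1)[of x] Node.prems Attach by auto
      then show ?thesis using Attach by auto
    next
      case False
      then have x: "x \<in> tverts r" using Node.prems by auto
      show ?thesis
      proof (cases "x \<in> tts r")
        case True
        then have "{x, a} \<in> tedges (Node c l r)" using Attach a
          by (auto simp: insert_commute)
        then show ?thesis by blast
      next
        case False then show ?thesis using Node.IH(2)[of x] x Attach by auto
      qed
    qed
  qed
qed

lemma subtrees_edges: "v \<in> subtrees T \<Longrightarrow> tedges v \<subseteq> tedges T"
proof (induction T)
  case (Node c l r) then show ?case by (cases c) auto
qed simp

lemma pm_ext:
  assumes "has_perfect_matching E S" "{u, w} \<in> E" "u \<notin> S" "w \<notin> S"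
  shows "has_perfect_matching E (S \<union> {u, w})"
proof -
  obtain M where M: "M \<subseteq> E" "\<forall>e\<in>M. e \<subseteq> S" "\<forall>e\<in>M. \<forall>f\<in>M. e \<noteq> f \<longrightarrow> e \<inter> f = {}" "\<Union>M = S"
    using assms(1) unfolding has_perfect_matching_def by blast
  have d: "\<forall>e\<in>M. e \<inter> {u, w} = {}" using M(2) assms(3,4) by blast
  have 1: "insert {u, w} M \<subseteq> E" using M(1) assms(2) by blast
  have 2: "\<forall>e\<in>insert {u, w} M. e \<subseteq> S \<union> {u, w}" using M(2) by blast
  have 3: "\<forall>e\<in>insert {u, w} M. \<forall>f\<in>insert {u, w} M. e \<noteq> f \<longrightarrow> e \<inter> f = {}"
    by (metis Int_commute M(3) d insert_iff)
  have 4: "\<Union>(insert {u, w} M) = S \<union> {u, w}" using M(4) by auto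
  from 1 2 3 4 have "\<exists>M. M \<subseteq> E \<and> (\<forall>e\<in>M. e \<subseteq> S \<union> {u, w}) \<and> (\<forall>e\<in>M. \<forall>f\<in>M. e \<noteq> f \<longrightarrow> e \<inter> f = {}) \<and> \<Union>M = S \<union> {u, w}"
    by blast
  then show ?thesis unfolding has_perfect_matching_def by blast
qed

lemma pm_remove:
  assumes M: "M \<subseteq> E" "\<forall>e\<in>M. e \<subseteq> A" "\<forall>e\<in>M. \<forall>f\<in>M. e \<noteq> f \<longrightarrow> e \<inter> f = {}" "\<Union>M = A"
    and e: "e \<in> M"
  shows "has_perfect_matching E (A - e)"
proof -
  have 1: "M - {e} \<subseteq> E" using M(1) by blast
  have 2: "\<forall>f\<in>M - {e}. f \<subseteq> A - e" using M(2,3) e by blast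
  have 3: "\<forall>f\<in>M - {e}. \<forall>g\<in>M - {e}. f \<noteq> g \<longrightarrow> f \<inter> g = {}" using M(3) by blast
  have 4: "\<Union>(M - {e}) = A - e"
  proof
    show "\<Union>(M - {e}) \<subseteq> A - e" using 2 by blast
    show "A - e \<subseteq> \<Union>(M - {e})" using M(4) by blast
  qed
  show ?thesis unfolding has_perfect_matching_def using 1 2 3 4
    by (intro exI[of _ "M - {e}"]) blast
qed

lemma pm_obtain:
  assumes "has_perfect_matching E A"
  obtains M where "M \<subseteq> E" "\<forall>e\<in>M. e \<subseteq> A" "\<forall>e\<in>M. \<forall>f\<in>M. e \<noteq> f \<longrightarrow> e \<inter> f = {}" "\<Union>M = A"
  using assms unfolding has_perfect_matching_def by blast

lemma nbhd_mono: "S \<subseteq> S' \<Longrightarrow> closed_nbhd E S \<subseteq> closed_nbhd E S'"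
  unfolding closed_nbhd_def by blast

context
  fixes v :: "'a dtree"
  assumes two: "\<forall>e\<in>tedges v. \<exists>a b. e = {a, b} \<and> a \<noteq> b"
begin

lemma parity:
  assumes "k_feasible v k S"
  shows "\<exists>m. card S = k + 2 * m"
proof -
  obtain X where X: "X \<subseteq> S \<inter> tts v" "card X = k" "has_perfect_matching (tedges v) (S - X)"
    and Ss: "S \<subseteq> tverts v"
    using assms unfolding k_feasible_def by blast
  have finS: "finite S" using finite_subset[OF Ss fin_tverts] .
  have XS: "X \<subseteq> S" using X(1) by blast
  obtain M where M: "M \<subseteq> tedges v" "\<forall>e\<in>M. e \<subseteq> S - X" "\<forall>e\<in>M. \<forall>f\<in>M. e \<noteq> f \<longrightarrow> e \<inter> f = {}" "\<Union>M = S - X"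
    by (rule pm_obtain[OF X(3)])
  have "M \<subseteq> Pow (S - X)" using M(2) by blast
  moreover have "finite (Pow (S - X))" using finS by simp
  ultimately have finM: "finite M" by (rule finite_subset)
  have c2: "card e = 2" if "e \<in> M" for e
  proof -
    have "e \<in> tedges v" using M(1) that by blast
    from bspec[OF two this] obtain a b where "e = {a, b}" "a \<noteq> b" by blast
    then show ?thesis by simp
  qed
  have fe: "finite e" if "e \<in> M" for e
  proof -
    have "e \<in> tedges v" using M(1) that by blast
    from bspec[OF two this] obtain a b where "e = {a, b}" by blast
    then show ?thesis by simp
  qed
  have pw: "pairwise disjnt M" using M(3) unfolding pairwise_def disjnt_def by blast
  have "card (\<Union>M) = sum card M"
    by (rule card_Union_disjoint[OF pw fe])
  also have "\<dots> = sum (\<lambda>_. 2) M" using c2 by (intro sum.cong) auto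
  also have "\<dots> = 2 * card M" by simp
  finally have "card (S - X) = 2 * card M" using M(4) by simp
  moreover have finX: "finite X" using finite_subset[OF XS finS] .
  moreover have "card (S - X) = card S - card X" using card_Diff_subset[OF finX XS] .
  moreover have "card X \<le> card S" using card_mono[OF finS XS] .
  ultimately have "card S = k + 2 * card M" using X(2) by linarith
  then show ?thesis by blast
qed

lemma up:
  assumes "k_feasible v k S" "k < card (tts v)"
  shows "\<exists>S'. k_feasible v (Suc k) S' \<and> card S' \<le> card S + 1"
proof -
  obtain X where Ss: "S \<subseteq> tverts v" and D: "tverts v - tts v \<subseteq> closed_nbhd (tedges v) S"
    and X: "X \<subseteq> S \<inter> tts v" "card X = k" and P: "has_perfect_matching (tedges v) (S - X)"
    using assms(1) unfolding k_feasible_def by blast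
  have finS: "finite S" using finite_subset[OF Ss fin_tverts] .
  have XS: "X \<subseteq> S" using X(1) by blast
  have finX: "finite X" using finite_subset[OF XS finS] .
  show ?thesis
  proof (cases "tts v \<subseteq> S")
    case False
    then obtain t where t: "t \<in> tts v" "t \<notin> S" by blast
    have tX: "t \<notin> X" using XS t by blast
    have "k_feasible v (Suc k) (insert t S)"
      unfolding k_feasible_def
    proof (intro conjI exI[of _ "insert t X"])
      have "t \<in> tverts v" using tts_sub[of v] t(1) by blast
      then show "insert t S \<subseteq> tverts v" using Ss by simp
      show "tverts v - tts v \<subseteq> closed_nbhd (tedges v) (insert t S)"
        using D nbhd_mono[of S "insert t S"] by blast
      show "insert t X \<subseteq> insert t S \<inter> tts v" using X(1) t by blast
      show "card (insert t X) = Suc k" using finX tX X(2) by simp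
      have "insert t S - insert t X = S - X" using t by blast
      then show "has_perfect_matching (tedges v) (insert t S - insert t X)" using P by simp
    qed
    moreover have "card (insert t S) \<le> card S + 1" using finS by (simp add: card_insert_if)
    ultimately show ?thesis by blast
  next
    case True
    have "\<not> tts v \<subseteq> X"
    proof
      assume "tts v \<subseteq> X"
      then have "card (tts v) \<le> card X" using finX card_mono by blast
      then show False using X(2) assms(2) by simp
    qed
    then obtain t where t: "t \<in> tts v" "t \<notin> X" by blast
    have tS: "t \<in> S - X" using True t by blast
    obtain M where M: "M \<subseteq> tedges v" "\<forall>e\<in>M. e \<subseteq> S - X" "\<forall>e\<in>M. \<forall>f\<in>M. e \<noteq> f \<longrightarrow> e \<inter> f = {}" "\<Union>M = S - X"
      by (rule pm_obtain[OF P])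
    obtain e where e: "e \<in> M" "t \<in> e" using M(4) tS by blast
    have "e \<in> tedges v" using M(1) e(1) by blast
    from bspec[OF two this] obtain a b where ab: "e = {a, b}" "a \<noteq> b" by blast
    obtain u where u: "e = {t, u}" "u \<noteq> t"
    proof (cases "t = a")
      case True then show ?thesis using that ab by blast
    next
      case False then have "t = b" using ab e(2) by blast
      then show ?thesis using that ab by (metis insert_commute)
    qed
    have uE: "{t, u} \<in> tedges v" using M(1) e(1) u(1) by blast
    have uSX: "u \<in> S - X" using M(2) e(1) u(1) by blast
    have P2: "has_perfect_matching (tedges v) ((S - X) - {t, u})"
      using pm_remove[OF M e(1)] u(1) by simp
    have cX: "card (insert t X) = Suc k" using finX t X(2) by simp
    show ?thesis
    proof (cases "\<exists>w. {u, w} \<in> tedges v \<and> w \<notin> S")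
      case True
      then obtain w where w: "{u, w} \<in> tedges v" "w \<notin> S" by blast
      have wV: "w \<in> tverts v" using tedges_sub[OF w(1)] by blast
      have "has_perfect_matching (tedges v) (((S - X) - {t, u}) \<union> {u, w})"
        by (rule pm_ext[OF P2 w(1)]) (use w(2) in auto)
      moreover have "((S - X) - {t, u}) \<union> {u, w} = insert w S - insert t X"
        using uSX u(2) w(2) tS XS by blast
      ultimately have PP: "has_perfect_matching (tedges v) (insert w S - insert t X)" by simp
      have "k_feasible v (Suc k) (insert w S)"
        unfolding k_feasible_def
      proof (intro conjI exI[of _ "insert t X"])
        show "insert w S \<subseteq> tverts v" using Ss wV by blast
        show "tverts v - tts v \<subseteq> closed_nbhd (tedges v) (insert w S)"
          using D nbhd_mono[of S "insert w S"] by blast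
        show "insert t X \<subseteq> insert w S \<inter> tts v" using X(1) t tS by blast
        show "card (insert t X) = Suc k" by (rule cX)
        show "has_perfect_matching (tedges v) (insert w S - insert t X)" by (rule PP)
      qed
      moreover have "card (insert w S) \<le> card S + 1" using finS by (simp add: card_insert_if)
      ultimately show ?thesis by blast
    next
      case False
      have eq: "(S - {u}) - insert t X = (S - X) - {t, u}" by blast
      have "k_feasible v (Suc k) (S - {u})"
        unfolding k_feasible_def
      proof (intro conjI exI[of _ "insert t X"])
        show "S - {u} \<subseteq> tverts v" using Ss by blast
        show "tverts v - tts v \<subseteq> closed_nbhd (tedges v) (S - {u})"
        proof
          fix y assume y: "y \<in> tverts v - tts v"
          then have yN: "y \<in> closed_nbhd (tedges v) S" using D by blast
          show "y \<in> closed_nbhd (tedges v) (S - {u})"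
          proof (cases "y \<in> S")
            case True
            show ?thesis
            proof (cases "y = u")
              case True
              have "t \<in> S - {u}" using tS u(2) by blast
              then show ?thesis using uE True unfolding closed_nbhd_def by blast
            next
              case False
              then show ?thesis using \<open>y \<in> S\<close> unfolding closed_nbhd_def by blast
            qed
          next
            case ynS: False
            then obtain z where z: "z \<in> S" "{z, y} \<in> tedges v" using yN unfolding closed_nbhd_def by blast
            have "z \<noteq> u" using z ynS \<open>\<not> (\<exists>w. {u, w} \<in> tedges v \<and> w \<notin> S)\<close> by blast
            then show ?thesis using z unfolding closed_nbhd_def by blast
          qed
        qed
        show "insert t X \<subseteq> (S - {u}) \<inter> tts v" using X(1) t tS u(2) uSX by blast
        show "card (insert t X) = Suc k" by (rule cX)
        show "has_perfect_matching (tedges v) (S - {u} - insert t X)" using P2 eq by simp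
      qed
      moreover have "card (S - {u}) \<le> card S + 1" using card_Diff1_le[of S u] by linarith
      ultimately show ?thesis by blast
    qed
  qed
qed

lemma down:
  assumes "k_feasible v (Suc k) S"
  shows "\<exists>S'. k_feasible v k S' \<and> card S' \<le> card S + 1"
proof -
  obtain X where Ss: "S \<subseteq> tverts v" and D: "tverts v - tts v \<subseteq> closed_nbhd (tedges v) S"
    and X: "X \<subseteq> S \<inter> tts v" "card X = Suc k" and P: "has_perfect_matching (tedges v) (S - X)"
    using assms(1) unfolding k_feasible_def by blast
  have finS: "finite S" using finite_subset[OF Ss fin_tverts] .
  have XS: "X \<subseteq> S" using X(1) by blast
  have finX: "finite X" using finite_subset[OF XS finS] .
  obtain x where x: "x \<in> X" using X(2) by (metis card.empty ex_in_conv nat.distinct(1))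
  have cX: "card (X - {x}) = k" using X(2) x finX by simp
  show ?thesis
  proof (cases "\<exists>w. {x, w} \<in> tedges v \<and> w \<notin> S")
    case True
    then obtain w where w: "{x, w} \<in> tedges v" "w \<notin> S" by blast
    have wV: "w \<in> tverts v" using tedges_sub[OF w(1)] by blast
    have "has_perfect_matching (tedges v) ((S - X) \<union> {x, w})"
      by (rule pm_ext[OF P w(1)]) (use w(2) x in auto)
    moreover have "(S - X) \<union> {x, w} = insert w S - (X - {x})" using x XS w(2) by blast
    ultimately have PP: "has_perfect_matching (tedges v) (insert w S - (X - {x}))" by simp
    have "k_feasible v k (insert w S)"
      unfolding k_feasible_def
    proof (intro conjI exI[of _ "X - {x}"])
      show "insert w S \<subseteq> tverts v" using Ss wV by blast
      show "tverts v - tts v \<subseteq> closed_nbhd (tedges v) (insert w S)"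
        using D nbhd_mono[of S "insert w S"] by blast
      show "X - {x} \<subseteq> insert w S \<inter> tts v" using X(1) by blast
      show "card (X - {x}) = k" by (rule cX)
      show "has_perfect_matching (tedges v) (insert w S - (X - {x}))" by (rule PP)
    qed
    moreover have "card (insert w S) \<le> card S + 1" using finS by (simp add: card_insert_if)
    ultimately show ?thesis by blast
  next
    case False
    have eq: "(S - {x}) - (X - {x}) = S - X" using x by blast
    have "k_feasible v k (S - {x})"
      unfolding k_feasible_def
    proof (intro conjI exI[of _ "X - {x}"])
      show "S - {x} \<subseteq> tverts v" using Ss by blast
      show "tverts v - tts v \<subseteq> closed_nbhd (tedges v) (S - {x})"
      proof
        fix y assume y: "y \<in> tverts v - tts v"
        then have yN: "y \<in> closed_nbhd (tedges v) S" using D by blast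
        have yx: "y \<noteq> x" using y x X(1) by blast
        show "y \<in> closed_nbhd (tedges v) (S - {x})"
        proof (cases "y \<in> S")
          case True
          then show ?thesis using yx unfolding closed_nbhd_def by blast
        next
          case ynS: False
          then obtain z where z: "z \<in> S" "{z, y} \<in> tedges v" using yN unfolding closed_nbhd_def by blast
          have "z \<noteq> x" using z ynS False by blast
          then show ?thesis using z unfolding closed_nbhd_def by blast
        qed
      qed
      show "X - {x} \<subseteq> (S - {x}) \<inter> tts v" using X(1) by blast
      show "card (X - {x}) = k" by (rule cX)
      show "has_perfect_matching (tedges v) (S - {x} - (X - {x}))" using P eq by simp
    qed
    moreover have "card (S - {x}) \<le> card S + 1" using card_Diff1_le[of S x] by linarith
    ultimately show ?thesis by blast
  qed
qed

lemma exists0_aux: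
  "finite U \<Longrightarrow> U \<subseteq> tverts v - tts v \<Longrightarrow>
    \<exists>S. S \<subseteq> tverts v \<and> has_perfect_matching (tedges v) S \<and> U \<subseteq> closed_nbhd (tedges v) S"
proof (induction U rule: finite_induct)
  case empty
  have "has_perfect_matching (tedges v) {}" unfolding has_perfect_matching_def by (intro exI[of _ "{}"]) simp
  then show ?case by blast
next
  case (insert u U)
  have "U \<subseteq> tverts v - tts v" using insert.prems by blast
  then obtain S where S: "S \<subseteq> tverts v" "has_perfect_matching (tedges v) S" "U \<subseteq> closed_nbhd (tedges v) S"
    using insert.IH by blast
  show ?case
  proof (cases "u \<in> closed_nbhd (tedges v) S")
    case True
    then have "insert u U \<subseteq> closed_nbhd (tedges v) S" using S(3) by blast
    then show ?thesis using S(1,2) by blast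
  next
    case False
    have uT: "u \<in> tverts v - tts v" using insert.prems by blast
    obtain w where w: "{u, w} \<in> tedges v" using nbr[OF uT] by blast
    have uS: "u \<notin> S" using False unfolding closed_nbhd_def by (simp add: Un_iff)
    have wS: "w \<notin> S"
    proof
      assume "w \<in> S"
      have "{w, u} \<in> tedges v" using w by (simp add: insert_commute)
      then show False using False \<open>w \<in> S\<close> unfolding closed_nbhd_def by blast
    qed
    have 1: "has_perfect_matching (tedges v) (S \<union> {u, w})" by (rule pm_ext[OF S(2) w uS wS])
    have 2: "S \<union> {u, w} \<subseteq> tverts v" using S(1) tedges_sub[OF w] by blast
    have "closed_nbhd (tedges v) S \<subseteq> closed_nbhd (tedges v) (S \<union> {u, w})" by (rule nbhd_mono) blast
    moreover have "u \<in> closed_nbhd (tedges v) (S \<union> {u, w})" unfolding closed_nbhd_def by blast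
    ultimately have 3: "insert u U \<subseteq> closed_nbhd (tedges v) (S \<union> {u, w})" using S(3) by blast
    from 1 2 3 show ?thesis by blast
  qed
qed

lemma exists_k: "k \<le> card (tts v) \<Longrightarrow> \<exists>S. k_feasible v k S"
proof (induction k)
  case 0
  obtain S where S: "S \<subseteq> tverts v" "has_perfect_matching (tedges v) S" "tverts v - tts v \<subseteq> closed_nbhd (tedges v) S"
    using exists0_aux[of "tverts v - tts v"] fin_tverts by blast
  have "k_feasible v 0 S" unfolding k_feasible_def using S by (intro conjI exI[of _ "{}"]) auto
  then show ?case by blast
next
  case (Suc k)
  then obtain S where S: "k_feasible v k S" by auto
  have "k < card (tts v)" using Suc.prems by simp
  then show ?case using up[OF S] by blast
qed

lemma gamma_props:
  assumes "k \<le> card (tts v)"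
  shows "\<exists>S. k_feasible v k S \<and> card S = gamma_hat v k"
    and "k_feasible v k S \<Longrightarrow> gamma_hat v k \<le> card S"
proof -
  obtain S0 where "k_feasible v k S0" using exists_k assms by blast
  then have ex: "\<exists>n S. k_feasible v k S \<and> card S = n" by blast
  show "\<exists>S. k_feasible v k S \<and> card S = gamma_hat v k"
    unfolding gamma_hat_def by (rule LeastI_ex[OF ex])
  show "k_feasible v k S \<Longrightarrow> gamma_hat v k \<le> card S"
    unfolding gamma_hat_def by (rule Least_le) blast
qed

lemma main:
  assumes "k < card (tts v)"
  shows "\<bar>int (gamma_hat v k) - int (gamma_hat v (k + 1))\<bar> = 1"
proof -
  obtain S where S: "k_feasible v k S" "card S = gamma_hat v k" using gamma_props(1)[of k] assms by auto
  obtain S1 where S1: "k_feasible v (Suc k) S1" "card S1 = gamma_hat v (Suc k)"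
    using gamma_props(1)[of "Suc k"] assms by auto
  obtain A where A: "k_feasible v (Suc k) A" "card A \<le> card S + 1" using up[OF S(1) assms] by blast
  obtain B where B: "k_feasible v k B" "card B \<le> card S1 + 1" using down[OF S1(1)] by blast
  have 1: "gamma_hat v (Suc k) \<le> gamma_hat v k + 1"
    using gamma_props(2)[OF _ A(1)] assms A(2) S(2) by simp
  have 2: "gamma_hat v k \<le> gamma_hat v (Suc k) + 1"
    using gamma_props(2)[OF _ B(1)] assms B(2) S1(2) by simp
  obtain m where m: "gamma_hat v k = k + 2 * m" using parity[OF S(1)] S(2) by auto
  obtain m1 where m1: "gamma_hat v (Suc k) = Suc k + 2 * m1" using parity[OF S1(1)] S1(2) by auto
  have "m = m1 \<or> m = m1 + 1" using 1 2 m m1 by linarith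
  then show ?thesis using m m1 by auto
qed

end

theorem lemma4:
  fixes T :: "'a dtree" and V :: "'a set" and E :: "'a set set" and v :: "'a dtree" and k :: nat
  assumes "distance_hereditary V E"
    and "decomposition_tree T V E"
    and "v \<in> subtrees T" and "is_internal v"
    and "k < card (tts v)"
  shows "\<bar>int (gamma_hat v k) - int (gamma_hat v (k + 1))\<bar> = 1"
proof -
  have sg: "simple_graph V E" using assms(1) unfolding distance_hereditary_def by blast
  have "tedges v \<subseteq> E" using subtrees_edges[OF assms(3)] assms(2) unfolding decomposition_tree_def by blast
  then have "\<forall>e\<in>tedges v. \<exists>a b. e = {a, b} \<and> a \<noteq> b" using sg unfolding simple_graph_def by blast
  then show ?thesis using main assms(5) by blast
qed

end
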